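(* If $\mathscr{S}$ is a relaxed scenario, then $G_{=}(\mathscr{S})$ does not contain an induced path on six vertices.
   Context: All trees are planted phylogenetic trees: a tree $T$ has a distinguished vertex $0_T$ of degree $1$ whose unique neighbor $\rho_T$ is the root, and every vertex other than $0_T$ and the leaves $L(T)$ has at least two children. For $x,y\in V(T)$ write $y\preceq_T x$ if $x$ lies on the path from $0_T$ to $y$; edges are written $uv$ with $v\prec_T u$. $\mathrm{lca}_T$ denotes the last common ancestor. A time map for $T$ is $\tau_T\colon V(T)\to\mathbb{R}$ with $\tau_T(x)<\tau_T(y)$ whenever $x\prec_T y$. A relaxed scenario $\mathscr{S}=(T,S,\sigma,\mu,\tau_T,\tau_S)$ consists of a gene tree $T$ with time map $\tau_T$, a species tree $S$ with time map $\tau_S$, a map $\sigma\colon L(T)\to M$ with $M\subseteq L(S)$, and a map $\mu\colon V(T)\to V(S)\cup E(S)$ such that (S0) $\mu(x)=0_S$ iff $x=0_T$; (S1) $\mu(x)\in L(S)$ iff $x\in L(T)$, in which case $\mu(x)=\sigma(x)$; (S2) if $\mu(x)\in V(S)$ then $\tau_S(\mu(x))=\tau_T(x)$; (S3) if $\mu(x)=uv\in E(S)$ then $\tau_S(v)<\tau_T(x)<\tau_S(u)$. The EDT graph $G_{=}(\mathscr{S})$ has vertex set $L(T)$ and an edge $xy$ ($x\ne y$) iff $\tau_T(\mathrm{lca}_T(x,y))=\tau_S(\mathrm{lca}_S(\sigma(x),\sigma(y)))$. *)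

theory Defs
  imports Complex_Main
begin

text \<open>A rooted tree is given by a vertex set V, a set E of directed edges (u,v)
  meaning v is a child of u, and the planting vertex z (playing the role of 0_T).\<close>

definition children :: "('v \<times> 'v) set \<Rightarrow> 'v \<Rightarrow> 'v set" where
  "children E u = {v. (u, v) \<in> E}"

text \<open>preceq E y x  means  y \<preceq>_T x, i.e. x lies on the path from 0_T to y.\<close>
definition preceq :: "('v \<times> 'v) set \<Rightarrow> 'v \<Rightarrow> 'v \<Rightarrow> bool" where
  "preceq E y x \<longleftrightarrow> (x, y) \<in> E\<^sup>*"

definition prec :: "('v \<times> 'v) set \<Rightarrow> 'v \<Rightarrow> 'v \<Rightarrow> bool" where
  "prec E y x \<longleftrightarrow> (x, y) \<in> E\<^sup>+"

definition leaves :: "'v set \<Rightarrow> ('v \<times> 'v) set \<Rightarrow> 'v \<Rightarrow> 'v set" where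
  "leaves V E z = {v \<in> V. v \<noteq> z \<and> children E v = {}}"

definition planted_phylo_tree :: "'v set \<Rightarrow> ('v \<times> 'v) set \<Rightarrow> 'v \<Rightarrow> bool" where
  "planted_phylo_tree V E z \<longleftrightarrow>
     finite V \<and> E \<subseteq> V \<times> V \<and> z \<in> V \<and> acyclic E \<and>
     (\<forall>u. (u, z) \<notin> E) \<and> card (children E z) = 1 \<and>
     (\<forall>v \<in> V. v \<noteq> z \<longrightarrow> (\<exists>!u. (u, v) \<in> E)) \<and>
     (\<forall>v \<in> V. preceq E v z) \<and>
     (\<forall>v \<in> V. v \<noteq> z \<and> v \<notin> leaves V E z \<longrightarrow> card (children E v) \<ge> 2)"

definition lca :: "'v set \<Rightarrow> ('v \<times> 'v) set \<Rightarrow> 'v \<Rightarrow> 'v \<Rightarrow> 'v" where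
  "lca V E x y = (THE w. w \<in> V \<and> preceq E x w \<and> preceq E y w \<and>
       (\<forall>w' \<in> V. preceq E x w' \<and> preceq E y w' \<longrightarrow> preceq E w w'))"

definition time_map :: "'v set \<Rightarrow> ('v \<times> 'v) set \<Rightarrow> ('v \<Rightarrow> real) \<Rightarrow> bool" where
  "time_map V E \<tau> \<longleftrightarrow> (\<forall>x \<in> V. \<forall>y \<in> V. prec E x y \<longrightarrow> \<tau> x < \<tau> y)"

text \<open>The reconciliation map mu sends gene-tree vertices to species-tree vertices
  (Inl v) or species-tree edges (Inr (u,v)).\<close>

definition relaxed_scenario ::
  "'v set \<Rightarrow> ('v \<times> 'v) set \<Rightarrow> 'v \<Rightarrow>
   's set \<Rightarrow> ('s \<times> 's) set \<Rightarrow> 's \<Rightarrow>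
   ('v \<Rightarrow> 's) \<Rightarrow> 's set \<Rightarrow> ('v \<Rightarrow> 's + ('s \<times> 's)) \<Rightarrow>
   ('v \<Rightarrow> real) \<Rightarrow> ('s \<Rightarrow> real) \<Rightarrow> bool" where
  "relaxed_scenario VT ET zT VS ES zS \<sigma> M \<mu> \<tau>T \<tau>S \<longleftrightarrow>
     planted_phylo_tree VT ET zT \<and> planted_phylo_tree VS ES zS \<and>
     time_map VT ET \<tau>T \<and> time_map VS ES \<tau>S \<and>
     M \<subseteq> leaves VS ES zS \<and> \<sigma> ` leaves VT ET zT \<subseteq> M \<and>
     (\<forall>x \<in> VT. \<mu> x \<in> Inl ` VS \<union> Inr ` ES) \<and>
     (\<forall>x \<in> VT. \<mu> x = Inl zS \<longleftrightarrow> x = zT) \<and>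
     (\<forall>x \<in> VT. (\<mu> x \<in> Inl ` leaves VS ES zS \<longleftrightarrow> x \<in> leaves VT ET zT)) \<and>
     (\<forall>x \<in> leaves VT ET zT. \<mu> x = Inl (\<sigma> x)) \<and>
     (\<forall>x \<in> VT. \<forall>v. \<mu> x = Inl v \<longrightarrow> \<tau>S v = \<tau>T x) \<and>
     (\<forall>x \<in> VT. \<forall>u v. \<mu> x = Inr (u, v) \<longrightarrow> \<tau>S v < \<tau>T x \<and> \<tau>T x < \<tau>S u)"

text \<open>Adjacency in the EDT graph G_=(S); its vertex set is the leaf set of T.\<close>
definition edt_edge ::
  "'v set \<Rightarrow> ('v \<times> 'v) set \<Rightarrow> 's set \<Rightarrow> ('s \<times> 's) set \<Rightarrow>
   ('v \<Rightarrow> 's) \<Rightarrow> ('v \<Rightarrow> real) \<Rightarrow> ('s \<Rightarrow> real) \<Rightarrow> 'v \<Rightarrow> 'v \<Rightarrow> bool" where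
  "edt_edge VT ET VS ES \<sigma> \<tau>T \<tau>S x y \<longleftrightarrow>
     x \<noteq> y \<and> \<tau>T (lca VT ET x y) = \<tau>S (lca VS ES (\<sigma> x) (\<sigma> y))"

definition has_induced_path :: "'a set \<Rightarrow> ('a \<Rightarrow> 'a \<Rightarrow> bool) \<Rightarrow> nat \<Rightarrow> bool" where
  "has_induced_path X G k \<longleftrightarrow>
     (\<exists>xs. length xs = k \<and> distinct xs \<and> set xs \<subseteq> X \<and>
        (\<forall>i < k. \<forall>j < k. i \<noteq> j \<longrightarrow> (G (xs ! i) (xs ! j) \<longleftrightarrow> (i = Suc j \<or> j = Suc i))))"

end

theory Submission
  imports Defs
begin


lemma ppt_parent_unique:
  assumes "planted_phylo_tree V E z" "(u, v) \<in> E" "(u', v) \<in> E"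
  shows "u = u'"
proof -
  have "v \<in> V" "v \<noteq> z" using assms unfolding planted_phylo_tree_def by auto
  then show ?thesis using assms unfolding planted_phylo_tree_def by metis
qed

lemma anc_comparable:
  assumes P: "planted_phylo_tree V E z" and ax: "(a, x) \<in> E\<^sup>*"
  shows "(b, x) \<in> E\<^sup>* \<Longrightarrow> (a, b) \<in> E\<^sup>* \<or> (b, a) \<in> E\<^sup>*"
  using ax
proof (induction arbitrary: b rule: rtrancl_induct)
  case base
  then show ?case by simp
next
  case (step y x')
  from step.prems show ?case
  proof (cases rule: rtranclE)
    case base
    then show ?thesis using step by (meson rtrancl.rtrancl_into_rtrancl)
  next
    case (step y')
    with ppt_parent_unique[OF P] \<open>(y, x') \<in> E\<close> have "y' = y" by metis
    then show ?thesis using step.IH step by auto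
  qed
qed

lemma anc_antisym:
  assumes P: "planted_phylo_tree V E z" and "(a, b) \<in> E\<^sup>*" "(b, a) \<in> E\<^sup>*"
  shows "a = b"
proof (rule ccontr)
  assume "a \<noteq> b"
  then have "(a, b) \<in> E\<^sup>+" using assms(2) by (meson rtranclD)
  then have "(a, a) \<in> E\<^sup>+" using assms(3) by (meson trancl_rtrancl_trancl)
  then show False using P unfolding planted_phylo_tree_def acyclic_def by blast
qed

lemma time_mono:
  assumes "time_map V E \<tau>" "a \<in> V" "b \<in> V" "(b, a) \<in> E\<^sup>*"
  shows "\<tau> a \<le> \<tau> b"
proof (cases "a = b")
  case False
  then have "(b, a) \<in> E\<^sup>+" using assms(4) by (metis rtranclD)
  then show ?thesis using assms unfolding time_map_def prec_def by fastforce
qed simp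

lemma lca_props:
  assumes P: "planted_phylo_tree V E z" and T: "time_map V E \<tau>" and xV: "x \<in> V" and yV: "y \<in> V"
  shows "lca V E x y \<in> V \<and> preceq E x (lca V E x y) \<and> preceq E y (lca V E x y) \<and>
       (\<forall>w' \<in> V. preceq E x w' \<and> preceq E y w' \<longrightarrow> preceq E (lca V E x y) w')"
proof -
  let ?Q = "\<lambda>w. w \<in> V \<and> preceq E x w \<and> preceq E y w \<and>
       (\<forall>w' \<in> V. preceq E x w' \<and> preceq E y w' \<longrightarrow> preceq E w w')"
  define A where "A = {w \<in> V. (w, x) \<in> E\<^sup>* \<and> (w, y) \<in> E\<^sup>*}"
  have fin: "finite A" using P unfolding A_def planted_phylo_tree_def by auto
  have zA: "z \<in> A" using P xV yV unfolding A_def planted_phylo_tree_def preceq_def by auto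
  obtain w where wA: "w \<in> A" and wmin: "\<forall>w'\<in>A. \<tau> w \<le> \<tau> w'"
    using fin zA
  proof -
    have ne: "\<tau> ` A \<noteq> {}" using zA by blast
    have "Min (\<tau> ` A) \<in> \<tau> ` A" using fin ne by (intro Min_in) auto
    then obtain w where "w \<in> A" "\<tau> w = Min (\<tau> ` A)" by auto
    moreover have "\<forall>w'\<in>A. Min (\<tau> ` A) \<le> \<tau> w'" using fin by auto
    ultimately show ?thesis using that by metis
  qed
  have "?Q w"
  proof -
    have "w \<in> V" "preceq E x w" "preceq E y w" using wA unfolding A_def preceq_def by auto
    moreover have "preceq E w w'" if "w' \<in> V" "preceq E x w'" "preceq E y w'" for w'
    proof -
      have w'A: "w' \<in> A" using that unfolding A_def preceq_def by auto
      have "(w, x) \<in> E\<^sup>*" "(w', x) \<in> E\<^sup>*" using wA w'A unfolding A_def by auto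
      then have "(w, w') \<in> E\<^sup>* \<or> (w', w) \<in> E\<^sup>*" using anc_comparable[OF P] by blast
      moreover have "\<not> (w, w') \<in> E\<^sup>+"
      proof
        assume "(w, w') \<in> E\<^sup>+"
        then have "\<tau> w' < \<tau> w" using T \<open>w \<in> V\<close> \<open>w' \<in> V\<close> unfolding time_map_def prec_def by blast
        then show False using wmin w'A by fastforce
      qed
      ultimately show ?thesis unfolding preceq_def by (metis rtranclD rtrancl.rtrancl_refl)
    qed
    ultimately show ?thesis by blast
  qed
  moreover have "w2 = w" if "?Q w2" for w2
    using that \<open>?Q w\<close> anc_antisym[OF P] unfolding preceq_def by blast
  ultimately have "?Q (THE w. ?Q w)" by (rule theI)
  then show ?thesis unfolding lca_def .
qed

lemma lca_sym: "lca V E x y = lca V E y x"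
  unfolding lca_def by (rule arg_cong[where f=The]) auto

lemma ultra:
  assumes P: "planted_phylo_tree V E z" and T: "time_map V E \<tau>"
    and xV: "x \<in> V" and yV: "y \<in> V" and wV: "w \<in> V"
  shows "\<tau> (lca V E x w) \<le> max (\<tau> (lca V E x y)) (\<tau> (lca V E y w))"
proof -
  note Lxy = lca_props[OF P T xV yV]
  note Lyw = lca_props[OF P T yV wV]
  note Lxw = lca_props[OF P T xV wV]
  define u where "u = lca V E x y"
  define v where "v = lca V E y w"
  have "(u, y) \<in> E\<^sup>*" "(v, y) \<in> E\<^sup>*" using Lxy Lyw unfolding u_def v_def preceq_def by auto
  then have "(u, v) \<in> E\<^sup>* \<or> (v, u) \<in> E\<^sup>*" using anc_comparable[OF P] by blast
  then show ?thesis
  proof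
    assume uv: "(u, v) \<in> E\<^sup>*"
    have "preceq E w u" using uv Lyw unfolding v_def preceq_def by (meson rtrancl_trans)
    moreover have "preceq E x u" using Lxy unfolding u_def by blast
    ultimately have "preceq E (lca V E x w) u" using Lxw Lxy unfolding u_def by blast
    then have "\<tau> (lca V E x w) \<le> \<tau> u" using time_mono[OF T] Lxw Lxy unfolding u_def preceq_def by blast
    then show ?thesis unfolding u_def by simp
  next
    assume vu: "(v, u) \<in> E\<^sup>*"
    have "preceq E x v" using vu Lxy unfolding u_def preceq_def by (meson rtrancl_trans)
    moreover have "preceq E w v" using Lyw unfolding v_def by blast
    ultimately have "preceq E (lca V E x w) v" using Lxw Lyw unfolding v_def by blast
    then have "\<tau> (lca V E x w) \<le> \<tau> v" using time_mono[OF T] Lxw Lyw unfolding v_def preceq_def by blast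
    then show ?thesis unfolding v_def by simp
  qed
qed


lemma comb2:
  fixes f g :: "'a \<Rightarrow> 'a \<Rightarrow> real" and x :: "nat \<Rightarrow> 'a"
  assumes Uf: "\<And>p q r. p \<in> X \<Longrightarrow> q \<in> X \<Longrightarrow> r \<in> X \<Longrightarrow> f p r \<le> max (f p q) (f q r)"
    and Ug: "\<And>p q r. p \<in> X \<Longrightarrow> q \<in> X \<Longrightarrow> r \<in> X \<Longrightarrow> g p r \<le> max (g p q) (g q r)"
    and Sf: "\<And>p q. p \<in> X \<Longrightarrow> q \<in> X \<Longrightarrow> f p q = f q p"
    and Sg: "\<And>p q. p \<in> X \<Longrightarrow> q \<in> X \<Longrightarrow> g p q = g q p"
    and X: "\<And>i. i < 6 \<Longrightarrow> x i \<in> X"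
    and E: "\<And>i j. i < 6 \<Longrightarrow> j < 6 \<Longrightarrow> i \<noteq> j \<Longrightarrow> (f (x i) (x j) = g (x i) (x j)) = (i = Suc j \<or> j = Suc i)"
  shows False
proof -
  have m0: "x 0 \<in> X" using X by simp
  have m1: "x 1 \<in> X" using X by simp
  have m2: "x 2 \<in> X" using X by simp
  have m3: "x 3 \<in> X" using X by simp
  have m4: "x 4 \<in> X" using X by simp
  have m5: "x 5 \<in> X" using X by simp
  have e01: "f (x 0) (x 1) = g (x 0) (x 1)" using E[of 0 1] by simp
  have e02: "f (x 0) (x 2) \<noteq> g (x 0) (x 2)" using E[of 0 2] by simp
  have e03: "f (x 0) (x 3) \<noteq> g (x 0) (x 3)" using E[of 0 3] by simp
  have e04: "f (x 0) (x 4) \<noteq> g (x 0) (x 4)" using E[of 0 4] by simp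
  have e05: "f (x 0) (x 5) \<noteq> g (x 0) (x 5)" using E[of 0 5] by simp
  have e12: "f (x 1) (x 2) = g (x 1) (x 2)" using E[of 1 2] by simp
  have e13: "f (x 1) (x 3) \<noteq> g (x 1) (x 3)" using E[of 1 3] by simp
  have e14: "f (x 1) (x 4) \<noteq> g (x 1) (x 4)" using E[of 1 4] by simp
  have e15: "f (x 1) (x 5) \<noteq> g (x 1) (x 5)" using E[of 1 5] by simp
  have e23: "f (x 2) (x 3) = g (x 2) (x 3)" using E[of 2 3] by simp
  have e24: "f (x 2) (x 4) \<noteq> g (x 2) (x 4)" using E[of 2 4] by simp
  have e25: "f (x 2) (x 5) \<noteq> g (x 2) (x 5)" using E[of 2 5] by simp
  have e34: "f (x 3) (x 4) = g (x 3) (x 4)" using E[of 3 4] by simp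
  have e35: "f (x 3) (x 5) \<noteq> g (x 3) (x 5)" using E[of 3 5] by simp
  have e45: "f (x 4) (x 5) = g (x 4) (x 5)" using E[of 4 5] by simp
  show False using Uf[OF m0 m1 m2] Uf[OF m0 m1 m3] Uf[OF m0 m1 m4] Uf[OF m0 m1 m5] Uf[OF m0 m2 m1] Uf[OF m0 m2 m3] Uf[OF m0 m2 m4] Uf[OF m0 m2 m5] Uf[OF m0 m3 m1] Uf[OF m0 m3 m2] Uf[OF m0 m3 m4] Uf[OF m0 m3 m5] Uf[OF m0 m4 m1] Uf[OF m0 m4 m2] Uf[OF m0 m4 m3] Uf[OF m0 m4 m5] Uf[OF m0 m5 m1] Uf[OF m0 m5 m2] Uf[OF m0 m5 m3] Uf[OF m0 m5 m4] Uf[OF m1 m0 m2] Uf[OF m1 m0 m3] Uf[OF m1 m0 m4] Uf[OF m1 m0 m5] Uf[OF m1 m2 m0] Uf[OF m1 m2 m3] Uf[OF m1 m2 m4] Uf[OF m1 m2 m5] Uf[OF m1 m3 m0] Uf[OF m1 m3 m2] Uf[OF m1 m3 m4] Uf[OF m1 m3 m5] Uf[OF m1 m4 m0] Uf[OF m1 m4 m2] Uf[OF m1 m4 m3] Uf[OF m1 m4 m5] Uf[OF m1 m5 m0] Uf[OF m1 m5 m2] Uf[OF m1 m5 m3] Uf[OF m1 m5 m4] Uf[OF m2 m0 m1] Uf[OF m2 m0 m3] Uf[OF m2 m0 m4] Uf[OF m2 m0 m5] Uf[OF m2 m1 m0] Uf[OF m2 m1 m3] Uf[OF m2 m1 m4]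 Uf[OF m2 m1 m5] Uf[OF m2 m3 m0] Uf[OF m2 m3 m1] Uf[OF m2 m3 m4] Uf[OF m2 m3 m5] Uf[OF m2 m4 m0] Uf[OF m2 m4 m1] Uf[OF m2 m4 m3] Uf[OF m2 m4 m5] Uf[OF m2 m5 m0] Uf[OF m2 m5 m1] Uf[OF m2 m5 m3] Uf[OF m2 m5 m4] Uf[OF m3 m0 m1] Uf[OF m3 m0 m2] Uf[OF m3 m0 m4] Uf[OF m3 m0 m5] Uf[OF m3 m1 m0] Uf[OF m3 m1 m2] Uf[OF m3 m1 m4] Uf[OF m3 m1 m5] Uf[OF m3 m2 m0] Uf[OF m3 m2 m1] Uf[OF m3 m2 m4] Uf[OF m3 m2 m5] Uf[OF m3 m4 m0] Uf[OF m3 m4 m1] Uf[OF m3 m4 m2] Uf[OF m3 m4 m5] Uf[OF m3 m5 m0] Uf[OF m3 m5 m1] Uf[OF m3 m5 m2] Uf[OF m3 m5 m4] Uf[OF m4 m0 m1] Uf[OF m4 m0 m2] Uf[OF m4 m0 m3] Uf[OF m4 m0 m5] Uf[OF m4 m1 m0] Uf[OF m4 m1 m2] Uf[OF m4 m1 m3] Uf[OF m4 m1 m5] Uf[OF m4 m2 m0] Uf[OF m4 m2 m1] Uf[OF m4 m2 m3] Uf[OF m4 m2 m5] Uf[OF m4 m3 m0] Uf[OF m4 m3 m1] Uf[OF m4 m3 m2] Uf[OF m4 m3 m5] Uf[OF m4 m5 m0] Uf[OF m4 m5 m1] Uf[OF m4 m5 m2] Uf[OF m4 m5 m3] Uf[OF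 m5 m0 m1] Uf[OF m5 m0 m2] Uf[OF m5 m0 m3] Uf[OF m5 m0 m4] Uf[OF m5 m1 m0] Uf[OF m5 m1 m2] Uf[OF m5 m1 m3] Uf[OF m5 m1 m4] Uf[OF m5 m2 m0] Uf[OF m5 m2 m1] Uf[OF m5 m2 m3] Uf[OF m5 m2 m4] Uf[OF m5 m3 m0] Uf[OF m5 m3 m1] Uf[OF m5 m3 m2] Uf[OF m5 m3 m4] Uf[OF m5 m4 m0] Uf[OF m5 m4 m1] Uf[OF m5 m4 m2] Uf[OF m5 m4 m3] Sf[OF m0 m1] Sf[OF m0 m2] Sf[OF m0 m3] Sf[OF m0 m4] Sf[OF m0 m5] Sf[OF m1 m2] Sf[OF m1 m3] Sf[OF m1 m4] Sf[OF m1 m5] Sf[OF m2 m3] Sf[OF m2 m4] Sf[OF m2 m5] Sf[OF m3 m4] Sf[OF m3 m5] Sf[OF m4 m5] Ug[OF m0 m1 m2] Ug[OF m0 m1 m3] Ug[OF m0 m1 m4] Ug[OF m0 m1 m5] Ug[OF m0 m2 m1] Ug[OF m0 m2 m3] Ug[OF m0 m2 m4] Ug[OF m0 m2 m5] Ug[OF m0 m3 m1] Ug[OF m0 m3 m2] Ug[OF m0 m3 m4] Ug[OF m0 m3 m5] Ug[OF m0 m4 m1] Ug[OF m0 m4 m2] Ug[OF m0 m4 m3] Ug[OF m0 m4 m5] Ug[OF m0 m5 m1] Ug[OF m0 m5 m2] Ug[OF m0 m5 m3] Ug[OF m0 m5 m4] Ug[OF m1 m0 m2] Ug[OF m1 m0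 m3] Ug[OF m1 m0 m4] Ug[OF m1 m0 m5] Ug[OF m1 m2 m0] Ug[OF m1 m2 m3] Ug[OF m1 m2 m4] Ug[OF m1 m2 m5] Ug[OF m1 m3 m0] Ug[OF m1 m3 m2] Ug[OF m1 m3 m4] Ug[OF m1 m3 m5] Ug[OF m1 m4 m0] Ug[OF m1 m4 m2] Ug[OF m1 m4 m3] Ug[OF m1 m4 m5] Ug[OF m1 m5 m0] Ug[OF m1 m5 m2] Ug[OF m1 m5 m3] Ug[OF m1 m5 m4] Ug[OF m2 m0 m1] Ug[OF m2 m0 m3] Ug[OF m2 m0 m4] Ug[OF m2 m0 m5] Ug[OF m2 m1 m0] Ug[OF m2 m1 m3] Ug[OF m2 m1 m4] Ug[OF m2 m1 m5] Ug[OF m2 m3 m0] Ug[OF m2 m3 m1] Ug[OF m2 m3 m4] Ug[OF m2 m3 m5] Ug[OF m2 m4 m0] Ug[OF m2 m4 m1] Ug[OF m2 m4 m3] Ug[OF m2 m4 m5] Ug[OF m2 m5 m0] Ug[OF m2 m5 m1] Ug[OF m2 m5 m3] Ug[OF m2 m5 m4] Ug[OF m3 m0 m1] Ug[OF m3 m0 m2] Ug[OF m3 m0 m4] Ug[OF m3 m0 m5] Ug[OF m3 m1 m0] Ug[OF m3 m1 m2] Ug[OF m3 m1 m4] Ug[OF m3 m1 m5] Ug[OF m3 m2 m0] Ug[OF m3 m2 m1] Ug[OF m3 m2 m4] Ug[OF m3 m2 m5] Ug[OF m3 m4 m0] Ug[OF m3 m4 m1] Ug[OF m3 m4 m2] Ug[OF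 m3 m4 m5] Ug[OF m3 m5 m0] Ug[OF m3 m5 m1] Ug[OF m3 m5 m2] Ug[OF m3 m5 m4] Ug[OF m4 m0 m1] Ug[OF m4 m0 m2] Ug[OF m4 m0 m3] Ug[OF m4 m0 m5] Ug[OF m4 m1 m0] Ug[OF m4 m1 m2] Ug[OF m4 m1 m3] Ug[OF m4 m1 m5] Ug[OF m4 m2 m0] Ug[OF m4 m2 m1] Ug[OF m4 m2 m3] Ug[OF m4 m2 m5] Ug[OF m4 m3 m0] Ug[OF m4 m3 m1] Ug[OF m4 m3 m2] Ug[OF m4 m3 m5] Ug[OF m4 m5 m0] Ug[OF m4 m5 m1] Ug[OF m4 m5 m2] Ug[OF m4 m5 m3] Ug[OF m5 m0 m1] Ug[OF m5 m0 m2] Ug[OF m5 m0 m3] Ug[OF m5 m0 m4] Ug[OF m5 m1 m0] Ug[OF m5 m1 m2] Ug[OF m5 m1 m3] Ug[OF m5 m1 m4] Ug[OF m5 m2 m0] Ug[OF m5 m2 m1] Ug[OF m5 m2 m3] Ug[OF m5 m2 m4] Ug[OF m5 m3 m0] Ug[OF m5 m3 m1] Ug[OF m5 m3 m2] Ug[OF m5 m3 m4] Ug[OF m5 m4 m0] Ug[OF m5 m4 m1] Ug[OF m5 m4 m2] Ug[OF m5 m4 m3] Sg[OF m0 m1] Sg[OF m0 m2] Sg[OF m0 m3] Sg[OF m0 m4] Sg[OF m0 m5] Sg[OF m1 m2] Sg[OF m1 m3] Sg[OF m1 m4] Sg[OF m1 m5] Sg[OF m2 m3] Sg[OF m2 m4]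 Sg[OF m2 m5] Sg[OF m3 m4] Sg[OF m3 m5] Sg[OF m4 m5] e01 e02 e03 e04 e05 e12 e13 e14 e15 e23 e24 e25 e34 e35 e45 by (smt (z3))
qed

theorem lemma22:
  fixes VT :: "'v set" and ET :: "('v \<times> 'v) set" and zT :: 'v
    and VS :: "'s set" and ES :: "('s \<times> 's) set" and zS :: 's
    and \<sigma> :: "'v \<Rightarrow> 's" and M :: "'s set" and \<mu> :: "'v \<Rightarrow> 's + ('s \<times> 's)"
    and \<tau>T :: "'v \<Rightarrow> real" and \<tau>S :: "'s \<Rightarrow> real"
  assumes "relaxed_scenario VT ET zT VS ES zS \<sigma> M \<mu> \<tau>T \<tau>S"
  shows "\<not> has_induced_path (leaves VT ET zT) (edt_edge VT ET VS ES \<sigma> \<tau>T \<tau>S) 6"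
proof
  assume "has_induced_path (leaves VT ET zT) (edt_edge VT ET VS ES \<sigma> \<tau>T \<tau>S) 6"
  then obtain xs where len: "length xs = 6" and dist: "distinct xs"
    and sub: "set xs \<subseteq> leaves VT ET zT"
    and H: "\<forall>i < 6. \<forall>j < 6. i \<noteq> j \<longrightarrow> (edt_edge VT ET VS ES \<sigma> \<tau>T \<tau>S (xs ! i) (xs ! j) \<longleftrightarrow> (i = Suc j \<or> j = Suc i))"
    unfolding has_induced_path_def by blast
  have PT: "planted_phylo_tree VT ET zT" and PS: "planted_phylo_tree VS ES zS"
    and TT: "time_map VT ET \<tau>T" and TS: "time_map VS ES \<tau>S"
    and MS: "M \<subseteq> leaves VS ES zS" and sM: "\<sigma> ` leaves VT ET zT \<subseteq> M"
    using assms unfolding relaxed_scenario_def by auto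
  let ?X = "leaves VT ET zT"
  have inT: "p \<in> VT" if "p \<in> ?X" for p using that unfolding leaves_def by auto
  have inS: "\<sigma> p \<in> VS" if "p \<in> ?X" for p using that sM MS unfolding leaves_def by auto
  show False
  proof (rule comb2[where X = ?X and f = "\<lambda>p q. \<tau>T (lca VT ET p q)"
        and g = "\<lambda>p q. \<tau>S (lca VS ES (\<sigma> p) (\<sigma> q))" and x = "\<lambda>i. xs ! i"])
    show "\<tau>T (lca VT ET p r) \<le> max (\<tau>T (lca VT ET p q)) (\<tau>T (lca VT ET q r))"
      if "p \<in> ?X" "q \<in> ?X" "r \<in> ?X" for p q r
      using ultra[OF PT TT] inT that by blast
    show "\<tau>S (lca VS ES (\<sigma> p) (\<sigma> r)) \<le> max (\<tau>S (lca VS ES (\<sigma> p) (\<sigma> q))) (\<tau>S (lca VS ES (\<sigma> q) (\<sigma> r)))"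
      if "p \<in> ?X" "q \<in> ?X" "r \<in> ?X" for p q r
      using ultra[OF PS TS] inS that by blast
    show "\<tau>T (lca VT ET p q) = \<tau>T (lca VT ET q p)" for p q by (simp add: lca_sym)
    show "\<tau>S (lca VS ES (\<sigma> p) (\<sigma> q)) = \<tau>S (lca VS ES (\<sigma> q) (\<sigma> p))" for p q by (simp add: lca_sym)
    show "xs ! i \<in> ?X" if "i < 6" for i using that len sub nth_mem by fastforce
    show "(\<tau>T (lca VT ET (xs ! i) (xs ! j)) = \<tau>S (lca VS ES (\<sigma> (xs ! i)) (\<sigma> (xs ! j)))) = (i = Suc j \<or> j = Suc i)"
      if "i < 6" "j < 6" "i \<noteq> j" for i j
    proof -
      have "xs ! i \<noteq> xs ! j" using dist len that by (simp add: nth_eq_iff_index_eq)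
      then show ?thesis using H that unfolding edt_edge_def by auto
    qed
  qed
qed

end
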